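(* Let $m,p\in(0,\infty)$, let $u,v$ be weights such that $(u,v)$ is an admissible pair of weights with respect to $(m,p)$, and let $\varphi$ be the fundamental function of $CL^{m,p}(u,v)$. Then there exist $K\in\{0,\infty\}$, the set \[ \mathbb{K}:=\begin{cases}\{k\in\mathbb{Z},\ k\le 0\} & \text{if } K=0,\\ \mathbb{Z} & \text{if } K=\infty,\end{cases} \] sets $\mathbb{K}_1,\mathbb{K}_2$ with $\mathbb{K}_1\cap\mathbb{K}_2=\varnothing$ and $\mathbb{K}_1\cup\mathbb{K}_2=\mathbb{K}$, and a sequence $\{t_k\}_{k\in\mathbb{K}}$ with the following properties: $0<t_{k-1}\le t_k<\infty$ for all $k\in\mathbb{K}\setminus\{K\}$; $t_0=\infty$ in case $K=0$; the inequalities \[ \int_0^{t_k} v(t)\,dt \ge 2^{\frac pm+1}\int_0^{t_{k-1}} v(t)\,dt,\qquad \varphi^p(t_k)\ge 2^{\frac pm+1}\varphi^p(t_{k-1}) \] hold for all $k\in\mathbb{K}$; the identity $\int_0^{t_k} v(t)\,dt = 2^{\frac pm+1}\int_0^{t_{k-1}} v(t)\,dt$ holds for all $k\in\mathbb{K}_1$; and the identity $\varphi^p(t_k)=2^{\frac pm+1}\varphi^p(t_{k-1})$ holds for all $k\in\mathbb{K}_2$.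
   Context: A weight is a nonnegative measurable function on $(0,\infty)$. For a weight $u$ and $0\le s\le t\le\infty$ put $U(s,t):=\int_s^t u(x)\,dx$. For $m,p\in(0,\infty)$ and weights $u,v$, the fundamental function of the Copson–Lorentz space $CL^{m,p}(u,v)$ is $\varphi:[0,\infty]\to[0,\infty]$, $\varphi(t):=\left(\int_0^t v(s)\,U(s,t)^{p/m}\,ds\right)^{1/p}$. The pair $(u,v)$ is called admissible with respect to $(m,p)$ if $0<\varphi(t)<\infty$ for all $t\in(0,\infty)$. *)

theory Defs
  imports "HOL-Analysis.Analysis"
begin

text \<open>Real powers on [0,\<infinity>] (used only with positive exponents):
  \<infinity> to a positive power is \<infinity>; finite values use the real powr.\<close>
definition epowr :: "ennreal \<Rightarrow> real \<Rightarrow> ennreal" where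
  "epowr x a = (if x = \<infinity> then \<infinity> else ennreal (enn2real x powr a))"

definition weight :: "(real \<Rightarrow> real) \<Rightarrow> bool" where
  "weight w \<longleftrightarrow> set_borel_measurable lborel {0<..} w \<and> (\<forall>x>0. 0 \<le> w x)"

definition Wint :: "(real \<Rightarrow> real) \<Rightarrow> real \<Rightarrow> ennreal \<Rightarrow> ennreal" where
  "Wint u s t = (\<integral>\<^sup>+ x \<in> {x::real. 0 < x \<and> s < x \<and> ennreal x < t}. ennreal (u x) \<partial>lborel)"

definition fundfun :: "real \<Rightarrow> real \<Rightarrow> (real \<Rightarrow> real) \<Rightarrow> (real \<Rightarrow> real) \<Rightarrow> ennreal \<Rightarrow> ennreal" where
  "fundfun m p u v t =
     epowr (\<integral>\<^sup>+ s \<in> {s::real. 0 < s \<and> ennreal s < t}.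
              ennreal (v s) * epowr (Wint u s t) (p / m) \<partial>lborel) (1 / p)"

definition admissible :: "real \<Rightarrow> real \<Rightarrow> (real \<Rightarrow> real) \<Rightarrow> (real \<Rightarrow> real) \<Rightarrow> bool" where
  "admissible m p u v \<longleftrightarrow>
     (\<forall>t::real. 0 < t \<longrightarrow> 0 < fundfun m p u v (ennreal t) \<and> fundfun m p u v (ennreal t) < \<infinity>)"

definition Kset :: "ereal \<Rightarrow> int set" where
  "Kset K = (if K = 0 then {k. k \<le> 0} else UNIV)"

end

theory Submission
  imports Defs
begin



lemma iso_Inf_Sup:
  fixes f :: "'a::complete_lattice \<Rightarrow> 'b::complete_lattice" and g :: "'b \<Rightarrow> 'a"
  assumes mf: "mono f" and mg: "mono g" and gf: "\<And>x. g (f x) = x" and fg: "\<And>y. f (g y) = y"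
  shows "f (Inf S) = Inf (f ` S)" and "f (Sup S) = Sup (f ` S)"
proof -
  show "f (Inf S) = Inf (f ` S)"
  proof (rule antisym)
    show "f (Inf S) \<le> Inf (f ` S)"
      by (auto intro!: Inf_greatest monoD[OF mf] Inf_lower)
    have "g (Inf (f ` S)) \<le> Inf S"
    proof (rule Inf_greatest)
      fix s assume "s \<in> S"
      then have "Inf (f ` S) \<le> f s" by (auto intro: Inf_lower)
      then show "g (Inf (f ` S)) \<le> s" using monoD[OF mg] gf by metis
    qed
    then show "Inf (f ` S) \<le> f (Inf S)" using monoD[OF mf] fg by metis
  qed
  show "f (Sup S) = Sup (f ` S)"
  proof (rule antisym)
    show "Sup (f ` S) \<le> f (Sup S)"
      by (auto intro!: Sup_least monoD[OF mf] Sup_upper)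
    have "Sup S \<le> g (Sup (f ` S))"
    proof (rule Sup_least)
      fix s assume "s \<in> S"
      then have "f s \<le> Sup (f ` S)" by (auto intro: Sup_upper)
      then show "s \<le> g (Sup (f ` S))" using monoD[OF mg] gf by metis
    qed
    then show "f (Sup S) \<le> Sup (f ` S)" using monoD[OF mf] fg by metis
  qed
qed

lemma epowr_mono: assumes "0 < q" "x \<le> y" shows "epowr x q \<le> epowr y q"
proof -
  { assume "x \<noteq> \<infinity>" "y \<noteq> \<infinity>"
    then have "enn2real x \<le> enn2real y" using assms(2) by (simp add: enn2real_mono top.not_eq_extremum)
    then have "enn2real x powr q \<le> enn2real y powr q" using assms(1) by (intro powr_mono2) auto }
  then show ?thesis using assms unfolding epowr_def
    by (auto simp: ennreal_leI top_unique)
qed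

lemma epowr_inv: assumes "0 < q" shows "epowr (epowr x q) (1/q) = x"
  using assms unfolding epowr_def
  by (auto simp: powr_powr enn2real_nonneg ennreal_enn2real_if)

lemma epowr_0[simp]: "epowr 0 q = 0"
  unfolding epowr_def by simp

lemma epowr_top[simp]: "epowr \<infinity> q = \<infinity>"
  unfolding epowr_def by simp

lemma epowr_eq_top: "epowr x q = \<infinity> \<longleftrightarrow> x = \<infinity>"
  unfolding epowr_def by auto

lemma epowr_pos: assumes "0 < q" "0 < x" shows "0 < epowr x q"
  using assms unfolding epowr_def
  by (auto simp: enn2real_positive_iff top.not_eq_extremum enn2real_eq_0_iff)

lemma epowr_iso:
  assumes "0 < q"
  shows "epowr (Inf S) q = Inf ((\<lambda>x. epowr x q) ` S)"
    and "epowr (Sup S) q = Sup ((\<lambda>x. epowr x q) ` S)"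
proof -
  have m1: "mono (\<lambda>x. epowr x q)" using assms by (auto intro!: monoI epowr_mono)
  have m2: "mono (\<lambda>x. epowr x (1/q))" using assms by (auto intro!: monoI epowr_mono)
  have i2: "epowr (epowr y (1/q)) q = y" for y
    using epowr_inv[of "1/q" y] assms by simp
  show "epowr (Inf S) q = Inf ((\<lambda>x. epowr x q) ` S)"
    using iso_Inf_Sup(1)[OF m1 m2 epowr_inv[OF assms] i2] .
  show "epowr (Sup S) q = Sup ((\<lambda>x. epowr x q) ` S)"
    using iso_Inf_Sup(2)[OF m1 m2 epowr_inv[OF assms] i2] .
qed

lemma mult_iso:
  fixes w :: ennreal
  assumes "w < \<infinity>" "S \<noteq> {}"
  shows "w * Inf S = Inf ((\<lambda>x. w * x) ` S)"
proof (cases "w = 0")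
  case True
  then show ?thesis using assms(2) by (simp add: image_constant_conv)
next
  case False
  have m1: "mono (\<lambda>x. w * x)" by (auto intro!: monoI mult_left_mono)
  have m2: "mono (\<lambda>x. x / w)" by (auto intro!: monoI divide_right_mono_ennreal)
  show ?thesis
    using iso_Inf_Sup(1)[OF m1 m2] False assms
    by (simp add: mult.commute mult_divide_eq_ennreal ennreal_times_divide)
qed




lemma le_div_iff: fixes C x a :: ennreal assumes "0 < C" "C < \<infinity>"
  shows "x \<le> a / C \<longleftrightarrow> x * C \<le> a"
proof
  assume "x \<le> a / C"
  then have "x * C \<le> a / C * C" by (rule mult_right_mono) simp
  also have "\<dots> = a" using assms by (simp add: ennreal_divide_times ennreal_times_divide mult_divide_eq_ennreal)
  finally show "x * C \<le> a" .
next
  assume "x * C \<le> a"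
  then have "x * C / C \<le> a / C" by (rule divide_right_mono_ennreal)
  then show "x \<le> a / C" using assms by (simp add: mult_divide_eq_ennreal)
qed

lemma div_le_iff: fixes C x a :: ennreal assumes "0 < C" "C < \<infinity>"
  shows "a / C \<le> x \<longleftrightarrow> a \<le> x * C"
proof
  assume "a / C \<le> x"
  then have "a / C * C \<le> x * C" by (rule mult_right_mono) simp
  moreover have "a / C * C = a" using assms by (simp add: ennreal_divide_times ennreal_times_divide mult_divide_eq_ennreal)
  ultimately show "a \<le> x * C" by simp
next
  assume "a \<le> x * C"
  then have "a / C \<le> x * C / C" by (rule divide_right_mono_ennreal)
  then show "a / C \<le> x" using assms by (simp add: mult_divide_eq_ennreal)
qed

lemma lt_C: fixes C a :: ennreal assumes "1 < C" "0 < a" "a < \<infinity>" shows "a < C * a"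
proof -
  obtain r where r: "a = ennreal r" "0 < r" using assms
    by (metis ennreal_cases ennreal_less_zero_iff infinity_ennreal_def less_irrefl top.not_eq_extremum)
  show ?thesis
  proof (cases "C = \<infinity>")
    case True then show ?thesis using assms by (simp add: ennreal_mult_top)
  next
    case False
    then obtain c where c: "C = ennreal c" "1 < c" using assms
      by (metis ennreal_cases ennreal_less_iff ennreal_1 infinity_ennreal_def less_imp_le order_le_less_trans zero_le_one)
    then show ?thesis using r by (simp add: ennreal_mult''[symmetric] ennreal_less_iff)
  qed
qed

locale absprob =
  fixes F G :: "ennreal \<Rightarrow> ennreal" and C :: ennreal
  assumes C1: "1 < C" and Cfin: "C < \<infinity>"
  and mF: "mono F" and mG: "mono G"
  and Gfin: "\<And>x. 0<x \<Longrightarrow> x<\<infinity> \<Longrightarrow> 0 < G x \<and> G x < \<infinity>"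
  and Fpos: "\<And>x. 0<x \<Longrightarrow> x<\<infinity> \<Longrightarrow> 0 < F x"
  and Fleft: "\<And>T e. 0 < T \<Longrightarrow> e < F T \<Longrightarrow> \<exists>y. 0<y \<and> y<T \<and> e < F y"
  and Gleft: "\<And>T e. 0 < T \<Longrightarrow> e < G T \<Longrightarrow> \<exists>y. 0<y \<and> y<T \<and> e < G y"
  and Fright: "\<And>x y0 e b. 0<x \<Longrightarrow> x<y0 \<Longrightarrow> F y0 < \<infinity> \<Longrightarrow> F x < e \<Longrightarrow> x < b \<Longrightarrow> \<exists>y. x<y \<and> y<b \<and> F y < e"
  and Gright: "\<And>x e b. 0<x \<Longrightarrow> x<\<infinity> \<Longrightarrow> G x < e \<Longrightarrow> x < b \<Longrightarrow> \<exists>y. x<y \<and> y<b \<and> G y < e"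
  and Fzero: "\<And>y0 e b. 0<y0 \<Longrightarrow> F y0 < \<infinity> \<Longrightarrow> 0 < e \<Longrightarrow> 0 < b \<Longrightarrow> \<exists>y. 0<y \<and> y<b \<and> F y < e"
  and Gzero: "\<And>e b. 0<e \<Longrightarrow> 0<b \<Longrightarrow> \<exists>y. 0<y \<and> y<b \<and> G y < e"
  and FB: "G \<infinity> = \<infinity> \<Longrightarrow> F \<infinity> = \<infinity> \<Longrightarrow> x < \<infinity> \<Longrightarrow> F x < \<infinity>"
begin

lemma C0: "0 < C" using C1 by (metis order.strict_trans zero_less_one)

lemma pos_at: assumes "0 < T" shows "0 < G T" "0 < F T"
proof -
  obtain x where x: "0 < x" "x < T" using dense assms by blast
  define x' where "x' = min x 1"
  have x': "0 < x'" "x' \<le> T" "x' < \<infinity>" using x by (auto simp: x'_def min_def intro: order_le_less_trans[of _ 1])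
  show "0 < G T" using Gfin[OF x'(1,3)] monoD[OF mG x'(2)] by (meson order_less_le_trans)
  show "0 < F T" using Fpos[OF x'(1,3)] monoD[OF mF x'(2)] by (meson order_less_le_trans)
qed

lemma down:
  assumes T: "0 < T" and fin: "F T < \<infinity> \<or> G T < \<infinity>"
  shows "\<exists>s. 0<s \<and> s<T \<and> C*F s \<le> F T \<and> C*G s \<le> G T \<and> (C*F s = F T \<or> C*G s = G T)"
proof -
  note ld = le_div_iff[OF C0 Cfin] and dl = div_le_iff[OF C0 Cfin]
  have GT: "0 < G T" and FT: "0 < F T" using pos_at[OF T] by auto
  define S where "S = {s. 0<s \<and> s<T \<and> C*F s \<le> F T \<and> C*G s \<le> G T}"
  have memS: "C*F s \<le> F T" "C*G s \<le> G T" "s < T" "0 < s" if "s \<in> S" for s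
    using that by (auto simp: S_def)
  obtain y1 where y1: "0<y1" "y1<T" "G y1 < G T / C"
    using Gzero[of "G T / C" T] GT T Cfin by (auto simp: ennreal_zero_less_divide)
  have y1': "C * G y1 \<le> G T" using less_imp_le[OF y1(3)] ld by (simp add: mult.commute)
  have ne: "S \<noteq> {}"
  proof (cases "F T = \<infinity>")
    case True then show ?thesis using y1 y1' by (auto simp: S_def)
  next
    case False
    then obtain y2 where y2: "0<y2" "y2<y1" "F y2 < F T / C"
      using Fzero[of T "F T / C" y1] FT T Cfin y1 by (auto simp: ennreal_zero_less_divide top.not_eq_extremum)
    have "C * G y2 \<le> G T" using y1' monoD[OF mG, of y2 y1] y2 by (meson less_imp_le mult_left_mono order_trans zero_le)
    moreover have "C * F y2 \<le> F T" using less_imp_le[OF y2(3)] ld by (simp add: mult.commute)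
    ultimately show ?thesis using y2 y1 by (auto simp: S_def)
  qed
  define s where "s = Sup S"
  have s0: "0 < s" using ne memS unfolding s_def by (meson Sup_upper equals0I order_less_le_trans)
  have sT: "s \<le> T" unfolding s_def using memS by (meson Sup_least less_imp_le)
  have clF: "C * F s \<le> F T"
  proof (rule ccontr)
    assume "\<not> ?thesis"
    then have "F T / C < F s" by (metis ld mult.commute not_le)
    then obtain y where y: "0<y" "y<s" "F T / C < F y" using Fleft[OF s0] by blast
    then obtain z where z: "z \<in> S" "y < z" using less_Sup_iff unfolding s_def by blast
    have "F y \<le> F z" using monoD[OF mF] z by auto
    also have "F z \<le> F T / C" using memS(1)[OF z(1)] ld by (simp add: mult.commute)
    finally show False using y by simp
  qed
  have clG: "C * G s \<le> G T"
  proof (rule ccontr)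
    assume "\<not> ?thesis"
    then have "G T / C < G s" by (metis ld mult.commute not_le)
    then obtain y where y: "0<y" "y<s" "G T / C < G y" using Gleft[OF s0] by blast
    then obtain z where z: "z \<in> S" "y < z" using less_Sup_iff unfolding s_def by blast
    have "G y \<le> G z" using monoD[OF mG] z by auto
    also have "G z \<le> G T / C" using memS(2)[OF z(1)] ld by (simp add: mult.commute)
    finally show False using y by simp
  qed
  have sT': "s < T"
  proof (rule ccontr)
    assume "\<not> s < T"
    then have "s = T" using sT by simp
    then have a: "C * F T \<le> F T" "C * G T \<le> G T" using clF clG by auto
    have "G T = \<infinity>" using lt_C[OF C1 GT] a(2) by (metis leD infinity_ennreal_def top.not_eq_extremum)
    then have "F T < \<infinity>" using fin by simp
    then show False using lt_C[OF C1 FT] a(1) by (simp add: leD)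
  qed
  have eq: "C*F s = F T \<or> C*G s = G T"
  proof (rule ccontr)
    assume "\<not> ?thesis"
    then have "C*F s < F T" "C*G s < G T" using clF clG by (auto simp: order_le_less)
    then have lF: "F s < F T / C" and lG: "G s < G T / C" by (metis dl mult.commute not_le)+
    have sfin: "s < \<infinity>" using sT' top_greatest[of T] by (metis infinity_ennreal_def order_less_le_trans)
    obtain y1 where y1: "s<y1" "y1<T" "G y1 < G T / C" using Gright[OF s0 sfin lG sT'] by blast
    obtain y2 where y2: "s<y2" "y2\<le>y1" "C * F y2 \<le> F T"
    proof (cases "F T = \<infinity>")
      case True then show ?thesis using that[of y1] y1 by simp
    next
      case False
      then obtain y where "s<y" "y<y1" "F y < F T / C"
        using Fright[OF s0 sT' _ lF y1(1)] by (auto simp: top.not_eq_extremum)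
      then show ?thesis using that[of y] ld[of "F y" "F T"] by (simp add: mult.commute less_imp_le)
    qed
    have "C * G y1 \<le> G T" using less_imp_le[OF y1(3)] ld by (simp add: mult.commute)
    then have "C * G y2 \<le> G T" using monoD[OF mG y2(2)] by (meson mult_left_mono order_trans zero_le)
    moreover have "C * F y2 \<le> F T" using y2(3) .
    ultimately have "y2 \<in> S" using y2 y1 s0 by (auto simp: S_def)
    then have "y2 \<le> s" unfolding s_def by (rule Sup_upper)
    then show False using y2 by simp
  qed
  show ?thesis using s0 sT' clF clG eq by blast
qed

lemma up:
  assumes GI: "G \<infinity> = \<infinity>" and FI: "F \<infinity> = \<infinity>" and x: "0 < x" "x < \<infinity>"
  shows "\<exists>y. x<y \<and> y<\<infinity> \<and> C*F x \<le> F y \<and> C*G x \<le> G y \<and> (F y = C*F x \<or> G y = C*G x)"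
proof -
  have Fx: "0 < F x" "F x < \<infinity>" using Fpos[OF x] FB[OF GI FI x(2)] by auto
  have Gx: "0 < G x" "G x < \<infinity>" using Gfin[OF x] by auto
  have CF: "F x < C * F x" "C * F x < \<infinity>" using lt_C[OF C1 Fx] Cfin Fx
    by (auto simp: ennreal_mult_less_top)
  have CG: "G x < C * G x" "C * G x < \<infinity>" using lt_C[OF C1 Gx] Cfin Gx
    by (auto simp: ennreal_mult_less_top)
  have gtx: "x < y" if "C * F x < F y" for y
  proof (rule ccontr)
    assume "\<not> x < y" then have "F y \<le> F x" using monoD[OF mF] by (simp add: not_less)
    then show False using that CF by simp
  qed
  define S where "S = {y. x<y \<and> y<\<infinity> \<and> C*F x \<le> F y \<and> C*G x \<le> G y}"
  obtain y1 where y1: "0<y1" "y1<\<infinity>" "C*F x < F y1" using Fleft[of \<infinity> "C * F x"] CF FI by auto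
  obtain y2 where y2: "0<y2" "y2<\<infinity>" "C*G x < G y2" using Gleft[of \<infinity> "C * G x"] CG GI by auto
  define y3 where "y3 = max y1 y2"
  have "C*F x < F y3" using y1 monoD[OF mF, of y1 y3] by (simp add: y3_def order_less_le_trans)
  moreover have "C*G x < G y3" using y2 monoD[OF mG, of y2 y3] by (simp add: y3_def order_less_le_trans)
  moreover have "y3 < \<infinity>" using y1 y2 by (simp add: y3_def)
  ultimately have y3S: "y3 \<in> S" using gtx by (auto simp: S_def)
  define y where "y = Inf S"
  have xy: "x \<le> y" unfolding y_def S_def by (auto intro: Inf_greatest)
  have yfin: "y < \<infinity>" using Inf_lower[OF y3S] \<open>y3 < \<infinity>\<close> unfolding y_def by simp
  have y0: "0 < y" using xy x by simp
  have clF: "C * F x \<le> F y"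
  proof (rule ccontr)
    assume "\<not> ?thesis" then have l: "F y < C * F x" by simp
    obtain z where z: "y < z" "z < \<infinity>" using dense yfin by blast
    have "F z < \<infinity>" using FB[OF GI FI z(2)] .
    then obtain w where w: "y < w" "F w < C * F x" using Fright[OF y0 z(1) _ l, of \<infinity>] yfin by auto
    then obtain s where s: "s \<in> S" "s < w" using Inf_less_iff unfolding y_def by blast
    have "F s \<le> F w" using monoD[OF mF] s by simp
    then show False using s w by (auto simp: S_def)
  qed
  have clG: "C * G x \<le> G y"
  proof (rule ccontr)
    assume "\<not> ?thesis" then have l: "G y < C * G x" by simp
    then obtain w where w: "y < w" "G w < C * G x" using Gright[OF y0 yfin l, of \<infinity>] yfin by auto
    then obtain s where s: "s \<in> S" "s < w" using Inf_less_iff unfolding y_def by blast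
    have "G s \<le> G w" using monoD[OF mG] s by simp
    then show False using s w by (auto simp: S_def)
  qed
  have xy': "x < y"
  proof (rule ccontr)
    assume "\<not> x < y" then have "y = x" using xy by simp
    then show False using clF CF(1) by simp
  qed
  have eq: "F y = C*F x \<or> G y = C*G x"
  proof (rule ccontr)
    assume "\<not> ?thesis"
    then have l: "C * F x < F y" "C * G x < G y" using clF clG by (auto simp: order_le_less)
    obtain z1 where z1: "0<z1" "z1<y" "C*F x < F z1" using Fleft[OF y0 l(1)] by blast
    obtain z2 where z2: "0<z2" "z2<y" "C*G x < G z2" using Gleft[OF y0 l(2)] by blast
    define z where "z = max z1 z2"
    have "C*F x < F z" using z1 monoD[OF mF, of z1 z] by (simp add: z_def order_less_le_trans)
    moreover have "C*G x < G z" using z2 monoD[OF mG, of z2 z] by (simp add: z_def order_less_le_trans)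
    moreover have "z < y" using z1 z2 by (simp add: z_def)
    ultimately have "z \<in> S" using gtx yfin by (auto simp: S_def)
    then have "y \<le> z" unfolding y_def by (rule Inf_lower)
    then show False using \<open>z < y\<close> by simp
  qed
  show ?thesis using xy' yfin clF clG eq by blast
qed


theorem abs_main:
  shows "\<exists>K::ereal. K \<in> {0, \<infinity>} \<and>
    (\<exists>(K1::int set) K2 (t::int \<Rightarrow> ennreal).
       K1 \<inter> K2 = {} \<and> K1 \<union> K2 = Kset K \<and>
       (\<forall>k \<in> Kset K - {k. ereal (of_int k) = K}.
          0 < t (k - 1) \<and> t (k - 1) \<le> t k \<and> t k < \<infinity>) \<and>
       (K = 0 \<longrightarrow> t 0 = \<infinity>) \<and>
       (\<forall>k \<in> Kset K. F (t k) \<ge> C * F (t (k - 1)) \<and> G (t k) \<ge> C * G (t (k - 1))) \<and>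
       (\<forall>k \<in> K1. F (t k) = C * F (t (k - 1))) \<and>
       (\<forall>k \<in> K2. G (t k) = C * G (t (k - 1))))"
proof -
  define Pd where "Pd T s \<longleftrightarrow> 0<s \<and> s<T \<and> C*F s \<le> F T \<and> C*G s \<le> G T \<and> (C*F s = F T \<or> C*G s = G T)" for T s
  define D where "D T = (SOME s. Pd T s)" for T
  have Dp: "Pd T (D T)" if "0 < T" "F T < \<infinity> \<or> G T < \<infinity>" for T
    unfolding D_def using down[OF that] someI_ex[of "Pd T"] unfolding Pd_def by blast
  have Dfin: "Pd T (D T)" if "0 < T" "T < \<infinity>" for T
    using Dp[of T] Gfin[OF that] that by blast
  have fin_lt: "s < \<infinity>" if "s < T" for s T :: ennreal
    using that top_greatest[of T] by (metis infinity_ennreal_def order_less_le_trans)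
  show ?thesis
  proof (cases "F \<infinity> < \<infinity> \<or> G \<infinity> < \<infinity>")
    case A: True
    define d where "d = rec_nat \<infinity> (\<lambda>_ x. D x)"
    have d0: "d 0 = \<infinity>" and dS: "d (Suc n) = D (d n)" for n by (simp_all add: d_def)
    have inv: "0 < d n \<and> (0 < n \<longrightarrow> d n < \<infinity>)" for n
    proof (induction n)
      case 0 then show ?case by (simp add: d0)
    next
      case (Suc n)
      have "Pd (d n) (d (Suc n))"
      proof (cases n)
        case 0 then show ?thesis using Dp[of "d n"] A by (simp add: d0 dS)
      next
        case (Suc k) then show ?thesis using Dfin[of "d n"] Suc.IH by (simp add: dS)
      qed
      then show ?case unfolding Pd_def using fin_lt by blast
    qed
    have step: "Pd (d n) (d (Suc n))" for n
    proof (cases n)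
      case 0 then show ?thesis using Dp[of "d n"] A inv[of n] by (simp add: d0 dS)
    next
      case (Suc k) then show ?thesis using Dfin[of "d n"] inv[of n] by (simp add: dS)
    qed
    define t where "t k = d (nat (-k))" for k :: int
    have R: "Pd (t k) (t (k - 1))" if "k \<le> 0" for k
    proof -
      have "nat (-(k-1)) = Suc (nat (-k))" using that by simp
      then show ?thesis using step[of "nat (-k)"] by (simp add: t_def)
    qed
    define K1 where "K1 = {k::int. k \<le> 0 \<and> F (t k) = C * F (t (k - 1))}"
    define K2 where "K2 = {k::int. k \<le> 0} - K1"
    have KS: "Kset 0 = {k. k \<le> 0}" by (simp add: Kset_def)
    have e0: "{k::int. ereal (of_int k) = 0} = {0}" by auto
    show ?thesis
    proof (rule exI[of _ "0::ereal"], rule conjI, simp, rule exI[of _ K1], rule exI[of _ K2], rule exI[of _ t], intro conjI)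
      show "K1 \<inter> K2 = {}" by (auto simp: K2_def)
      show "K1 \<union> K2 = Kset 0" by (auto simp: K1_def K2_def KS)
      show "\<forall>k\<in>Kset 0 - {k. ereal (of_int k) = 0}. 0 < t (k - 1) \<and> t (k - 1) \<le> t k \<and> t k < \<infinity>"
      proof
        fix k assume k: "k \<in> Kset 0 - {k. ereal (of_int k) = 0}"
        then have k0: "k < 0" by (auto simp: KS e0)
        then have "t k < \<infinity>" using inv[of "nat (-k)"] by (simp add: t_def)
        then show "0 < t (k - 1) \<and> t (k - 1) \<le> t k \<and> t k < \<infinity>" using R[of k] k0 by (auto simp: Pd_def less_imp_le)
      qed
      show "(0::ereal) = 0 \<longrightarrow> t 0 = \<infinity>" by (simp add: t_def d0)
      show "\<forall>k\<in>Kset 0. C * F (t (k - 1)) \<le> F (t k) \<and> C * G (t (k - 1)) \<le> G (t k)"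
        using R by (simp add: KS Pd_def)
      show "\<forall>k\<in>K1. F (t k) = C * F (t (k - 1))" by (simp add: K1_def)
      show "\<forall>k\<in>K2. G (t k) = C * G (t (k - 1))"
      proof
        fix k assume "k \<in> K2"
        then have "k \<le> 0" "F (t k) \<noteq> C * F (t (k - 1))" by (auto simp: K1_def K2_def)
        then show "G (t k) = C * G (t (k - 1))" using R[of k] unfolding Pd_def by metis
      qed
    qed
  next
    case B: False
    then have FI: "F \<infinity> = \<infinity>" and GI: "G \<infinity> = \<infinity>" by (metis top.not_eq_extremum infinity_ennreal_def)+
    define Pu where "Pu x y \<longleftrightarrow> x<y \<and> y<\<infinity> \<and> C*F x \<le> F y \<and> C*G x \<le> G y \<and> (F y = C*F x \<or> G y = C*G x)" for x y
    define U where "U x = (SOME y. Pu x y)" for x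
    have Up: "Pu x (U x)" if "0 < x" "x < \<infinity>" for x
      unfolding U_def using up[OF GI FI that] someI_ex[of "Pu x"] unfolding Pu_def by blast
    define a where "a = rec_nat 1 (\<lambda>_ x. U x)"
    have a0: "a 0 = 1" and aS: "a (Suc n) = U (a n)" for n by (simp_all add: a_def)
    define d where "d = rec_nat 1 (\<lambda>_ x. D x)"
    have d0: "d 0 = 1" and dS: "d (Suc n) = D (d n)" for n by (simp_all add: d_def)
    have ainv: "0 < a n \<and> a n < \<infinity>" for n
    proof (induction n)
      case 0 then show ?case by (simp add: a0)
    next
      case (Suc n) then show ?case using Up[of "a n"] by (auto simp: aS Pu_def)
    qed
    have dinv: "0 < d n \<and> d n < \<infinity>" for n
    proof (induction n)
      case 0 then show ?case by (simp add: d0)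
    next
      case (Suc n) then show ?case using Dfin[of "d n"] fin_lt by (auto simp: dS Pd_def)
    qed
    define t where "t k = (if 0 \<le> k then a (nat k) else d (nat (-k)))" for k :: int
    have R: "0 < t (k-1) \<and> t (k-1) \<le> t k \<and> t k < \<infinity> \<and> C * F (t (k - 1)) \<le> F (t k) \<and> C * G (t (k - 1)) \<le> G (t k)
       \<and> (F (t k) = C * F (t (k - 1)) \<or> G (t k) = C * G (t (k - 1)))" for k
    proof (cases "1 \<le> k")
      case True
      then have "nat k = Suc (nat (k-1))" by simp
      then have "t k = U (t (k-1))" using True by (simp add: t_def aS)
      then show ?thesis using Up[of "t (k-1)"] ainv[of "nat (k-1)"] True
        by (auto simp: Pu_def t_def)
    next
      case False
      have tk: "t k = d (nat (-k))" using False by (cases "k = 0") (auto simp: t_def a0 d0)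
      have "nat (-(k-1)) = Suc (nat (-k))" using False by simp
      then have "t (k-1) = D (t k)" using False tk by (simp add: t_def dS)
      then show ?thesis using Dfin[of "t k"] dinv[of "nat (-k)"] tk
        by (auto simp: Pd_def)
    qed
    define K1 where "K1 = {k::int. F (t k) = C * F (t (k - 1))}"
    define K2 where "K2 = UNIV - K1"
    have KS: "Kset \<infinity> = UNIV" by (simp add: Kset_def)
    show ?thesis
    proof (rule exI[of _ "\<infinity>::ereal"], rule conjI, simp, rule exI[of _ K1], rule exI[of _ K2], rule exI[of _ t], intro conjI)
      show "K1 \<inter> K2 = {}" by (auto simp: K2_def)
      show "K1 \<union> K2 = Kset \<infinity>" by (auto simp: K2_def KS)
      show "\<forall>k\<in>Kset \<infinity> - {k. ereal (of_int k) = \<infinity>}. 0 < t (k - 1) \<and> t (k - 1) \<le> t k \<and> t k < \<infinity>"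
        using R by blast
      show "(\<infinity>::ereal) = 0 \<longrightarrow> t 0 = \<infinity>" by simp
      show "\<forall>k\<in>Kset \<infinity>. C * F (t (k - 1)) \<le> F (t k) \<and> C * G (t (k - 1)) \<le> G (t k)"
        using R by blast
      show "\<forall>k\<in>K1. F (t k) = C * F (t (k - 1))" by (simp add: K1_def)
      show "\<forall>k\<in>K2. G (t k) = C * G (t (k - 1))"
        using R by (auto simp: K1_def K2_def)
    qed
  qed
qed

end




definition P :: "(real \<Rightarrow> ennreal) \<Rightarrow> real \<Rightarrow> ennreal \<Rightarrow> ennreal" where
  "P f s T = (\<integral>\<^sup>+ x. f x * indicator {x. s < x \<and> ennreal x < T} x \<partial>lborel)"

lemma ennreal_lt_pos: "0 < b \<Longrightarrow> (ennreal z < ennreal b) = (z < b)"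
  by (cases "z \<le> 0") (auto simp: ennreal_less_iff ennreal_lessI ennreal_eq_0_iff)

lemma set_interval_borel: "{x::real. s < x \<and> ennreal x < T} \<in> sets borel"
proof (rule real_interval_borel_measurable)
  show "is_interval {x::real. s < x \<and> ennreal x < T}"
    unfolding is_interval_1
    by (auto intro: order_le_less_trans[OF ennreal_leI])
qed

lemma P_integrand_meas:
  fixes f :: "real \<Rightarrow> ennreal"
  assumes "f \<in> borel_measurable lborel"
  shows "(\<lambda>x. f x * indicator {x. s < x \<and> ennreal x < T} x) \<in> borel_measurable lborel"
proof -
  have "(\<lambda>x. indicator {x. s < x \<and> ennreal x < T} x :: ennreal) \<in> borel_measurable lborel"
    by (rule borel_measurable_indicator) (simp add: set_interval_borel)
  from borel_measurable_times_ennreal[OF assms this] show ?thesis by simp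
qed

lemma P_mono: assumes "s' \<le> s" "T \<le> T'" shows "P f s T \<le> P f s' T'"
  unfolding P_def
  by (intro nn_integral_mono mult_left_mono) (use assms in \<open>auto split: split_indicator intro: order_less_le_trans\<close>)

lemma P_zero: assumes "T \<le> ennreal s" shows "P f s T = 0"
proof -
  have "False" if "s < x" "ennreal x < T" for x
  proof -
    have "T \<le> ennreal x" using assms ennreal_leI[of s x] that(1) by (meson less_imp_le order_trans)
    then show False using that(2) by simp
  qed
  then have "{x. s < x \<and> ennreal x < T} = {}" by blast
  then show ?thesis unfolding P_def by simp
qed

lemma antimono_meas:
  fixes g :: "real \<Rightarrow> ennreal"
  assumes "\<And>x y. x \<le> y \<Longrightarrow> g y \<le> g x"
  shows "g \<in> borel_measurable lborel"
proof -
  have "g \<in> borel_measurable borel"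
  proof (rule borel_measurableI_greater)
    fix c
    have "is_interval {x. c < g x}"
      unfolding is_interval_1 using assms by (auto intro: order_less_le_trans)
    then show "{x \<in> space borel. c < g x} \<in> sets borel"
      using real_interval_borel_measurable by simp
  qed
  then show ?thesis by simp
qed

definition ys :: "ennreal \<Rightarrow> nat \<Rightarrow> real" where
  "ys T n = (if T = \<infinity> then real n + 1 else enn2real T * (1 - 1 / (real n + 2)))"

lemma ys_pos: assumes "0 < T" shows "0 < ys T n"
proof (cases "T = \<infinity>")
  case False
  then have "0 < enn2real T" using assms by (simp add: enn2real_positive_iff top.not_eq_extremum)
  moreover have "0 < 1 - 1 / (real n + 2)" by (simp add: field_simps)
  ultimately show ?thesis using False by (simp add: ys_def)
qed (simp add: ys_def)

lemma ys_lt: assumes "0 < T" shows "ennreal (ys T n) < T"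
proof (cases "T = \<infinity>")
  case False
  then obtain t where t: "T = ennreal t" "0 < t" using assms
    by (metis enn2real_positive_iff ennreal_enn2real infinity_ennreal_def top.not_eq_extremum)
  have "ys T n < t" using t by (simp add: ys_def field_simps)
  then show ?thesis using t by (simp add: ennreal_lt_pos)
qed (simp add: ys_def)

lemma ys_inc: assumes "0 < T" shows "incseq (ys T)"
proof (rule incseq_SucI)
  fix n
  show "ys T n \<le> ys T (Suc n)"
  proof (cases "T = \<infinity>")
    case False
    have "1 - 1 / (real n + 2) \<le> 1 - 1 / (real (Suc n) + 2)" by (simp add: field_simps)
    then show ?thesis using False by (simp add: ys_def mult_left_mono enn2real_nonneg)
  qed (simp add: ys_def)
qed

lemma ys_cover: assumes "0 < T" "ennreal x < T" shows "\<exists>n. x < ys T n"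
proof (cases "x \<le> 0")
  case True then show ?thesis using ys_pos[OF assms(1)] by (meson le_less_trans)
next
  case xp: False
  show ?thesis
  proof (cases "T = \<infinity>")
    case True
    obtain n where "x < real n" using reals_Archimedean2 by blast
    then show ?thesis using True by (auto simp: ys_def intro!: exI[of _ n])
  next
    case False
    then obtain t where t: "T = ennreal t" "0 < t" using assms
      by (metis enn2real_positive_iff ennreal_enn2real infinity_ennreal_def top.not_eq_extremum)
    have xt: "x < t" using assms(2) t by (simp add: ennreal_lt_pos)
    obtain n where n: "t / (t - x) < real n" using reals_Archimedean2 by blast
    have "t < real n * (t - x)" using n xt by (simp add: field_simps)
    also have "\<dots> \<le> (real n + 2) * (t - x)" using xt by (intro mult_right_mono) auto
    finally have "t < (real n + 2) * (t - x)" .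
    then have "x < t * (1 - 1 / (real n + 2))" by (simp add: field_simps)
    then show ?thesis using t False by (auto simp: ys_def intro!: exI[of _ n])
  qed
qed

lemma SUP_ind2:
  fixes c :: ennreal
  shows "(SUP n. c * indicator (B n) x) = c * indicator (\<Union>n. B n) x"
proof (cases "x \<in> (\<Union>n. B n)")
  case True
  then obtain n where "x \<in> B n" by blast
  then have "(SUP n. c * indicator (B n) x) = c"
    by (intro antisym SUP_least SUP_upper2[of n]) (auto split: split_indicator)
  then show ?thesis using True by simp
next
  case False then show ?thesis by simp
qed

lemma INF_ind2:
  fixes c :: ennreal
  shows "(INF n. c * indicator (B n) x) = c * indicator (\<Inter>n. B n) x"
proof (cases "x \<in> (\<Inter>n. B n)")
  case False
  then obtain n where "x \<notin> B n" by blast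
  then have "(INF n. c * indicator (B n) x) = 0"
    by (intro antisym INF_lower2[of n]) auto
  then show ?thesis using False by simp
next
  case True then show ?thesis by simp
qed

lemma P_left:
  fixes f :: "real \<Rightarrow> ennreal"
  assumes f: "f \<in> borel_measurable lborel" and T: "0 < T"
  shows "P f s T = (SUP n. P f s (ennreal (ys T n)))"
proof -
  have pt: "(SUP n. f x * indicator {x. s < x \<and> ennreal x < ennreal (ys T n)} x)
      = f x * indicator {x. s < x \<and> ennreal x < T} x" for x
  proof -
    have eq: "(\<exists>n. s < x \<and> ennreal x < ennreal (ys T n)) \<longleftrightarrow> (s < x \<and> ennreal x < T)" for x
    proof
      assume "\<exists>n. s < x \<and> ennreal x < ennreal (ys T n)"
      then show "s < x \<and> ennreal x < T" using ys_lt[OF T] by (meson order.strict_trans)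
    next
      assume a: "s < x \<and> ennreal x < T"
      then obtain n where "x < ys T n" using ys_cover[OF T] by blast
      then show "\<exists>n. s < x \<and> ennreal x < ennreal (ys T n)" using a ys_pos[OF T] by (auto simp: ennreal_lt_pos)
    qed
    have "(\<Union>n. {x. s < x \<and> ennreal x < ennreal (ys T n)}) = {x. s < x \<and> ennreal x < T}"
      using eq by blast
    then show ?thesis using SUP_ind2[of "f x" "\<lambda>n. {x. s < x \<and> ennreal x < ennreal (ys T n)}" x] by simp
  qed
  have inc: "incseq (\<lambda>n x. f x * indicator {x. s < x \<and> ennreal x < ennreal (ys T n)} x)"
  proof (rule incseq_SucI, rule le_funI)
    fix n x
    have "ys T n \<le> ys T (Suc n)" using ys_inc[OF T] by (simp add: incseq_SucD)
    then show "f x * indicator {x. s < x \<and> ennreal x < ennreal (ys T n)} x \<le> f x * indicator {x. s < x \<and> ennreal x < ennreal (ys T (Suc n))} x"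
      by (intro mult_left_mono) (auto split: split_indicator intro: order_less_le_trans ennreal_leI)
  qed
  have "P f s T = (\<integral>\<^sup>+ x. (SUP n. f x * indicator {x. s < x \<and> ennreal x < ennreal (ys T n)} x) \<partial>lborel)"
    unfolding P_def pt ..
  also have "\<dots> = (SUP n. P f s (ennreal (ys T n)))"
    unfolding P_def by (rule nn_integral_monotone_convergence_SUP[OF inc P_integrand_meas[OF f]])
  finally show ?thesis .
qed

lemma P_right:
  fixes f :: "real \<Rightarrow> ennreal"
  assumes f: "f \<in> borel_measurable lborel" and x: "0 < x" "x < y0" and fin: "P f s (ennreal y0) < \<infinity>"
  shows "P f s (ennreal x) = (INF n. P f s (ennreal (x + (y0 - x) / (real n + 1))))"
proof -
  define xs where "xs n = x + (y0 - x) / (real n + 1)" for n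
  have xs_gt: "x < xs n" for n using x by (simp add: xs_def)
  have xs0: "xs 0 = y0" by (simp add: xs_def)
  have xs_dec: "xs (Suc n) \<le> xs n" for n using x by (simp add: xs_def frac_le)
  have pt: "(INF n. f z * indicator {x. s < x \<and> ennreal x < ennreal (xs n)} z)
      = f z * indicator {z. s < z \<and> z \<le> x} z" for z
  proof -
    have eq: "(\<forall>n. s < z \<and> ennreal z < ennreal (xs n)) \<longleftrightarrow> (s < z \<and> z \<le> x)" for z
    proof
      assume a: "\<forall>n. s < z \<and> ennreal z < ennreal (xs n)"
      have "z \<le> x"
      proof (rule ccontr)
        assume "\<not> z \<le> x"
        then have zx: "x < z" by simp
        obtain n where n: "(y0 - x) / (z - x) < real n" using reals_Archimedean2 by blast
        have "y0 - x < real n * (z - x)" using n zx by (simp add: field_simps)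
        also have "\<dots> \<le> (real n + 1) * (z - x)" using zx by (intro mult_right_mono) auto
        finally have "xs n < z" using zx by (simp add: xs_def field_simps)
        moreover have "z < xs n"
        proof -
          have "0 < xs n" using xs_gt[of n] x by simp
          then show ?thesis using a ennreal_lt_pos by blast
        qed
        ultimately show False by simp
      qed
      then show "s < z \<and> z \<le> x" using a by simp
    next
      assume H: "s < z \<and> z \<le> x"
      show "\<forall>n. s < z \<and> ennreal z < ennreal (xs n)"
      proof
        fix n
        have "z < xs n" "0 < xs n" using xs_gt[of n] x H by auto
        then show "s < z \<and> ennreal z < ennreal (xs n)" using H ennreal_lt_pos by blast
      qed
    qed
    have "(\<Inter>n. {x. s < x \<and> ennreal x < ennreal (xs n)}) = {z. s < z \<and> z \<le> x}"
      using eq by blast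
    then show ?thesis using INF_ind2[of "f z" "\<lambda>n. {x. s < x \<and> ennreal x < ennreal (xs n)}" z] by simp
  qed
  have dec: "decseq (\<lambda>n z. f z * indicator {x. s < x \<and> ennreal x < ennreal (xs n)} z)"
  proof (rule decseq_SucI, rule le_funI)
    fix n z
    show "f z * indicator {x. s < x \<and> ennreal x < ennreal (xs (Suc n))} z \<le> f z * indicator {x. s < x \<and> ennreal x < ennreal (xs n)} z"
      using xs_dec[of n] by (intro mult_left_mono) (auto split: split_indicator intro: order_less_le_trans ennreal_leI)
  qed
  have "P f s (ennreal x) = (\<integral>\<^sup>+ z. f z * indicator {z. s < z \<and> z \<le> x} z \<partial>lborel)"
    unfolding P_def
  proof (rule nn_integral_cong_AE)
    show "AE z in lborel. f z * indicator {w. s < w \<and> ennreal w < ennreal x} z = f z * indicator {z. s < z \<and> z \<le> x} z"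
      using AE_lborel_singleton[of x]
      by eventually_elim (auto split: split_indicator simp: ennreal_lt_pos x)
  qed
  also have "\<dots> = (\<integral>\<^sup>+ z. (INF n. f z * indicator {x. s < x \<and> ennreal x < ennreal (xs n)} z) \<partial>lborel)"
    unfolding pt ..
  also have "\<dots> = (INF n. P f s (ennreal (xs n)))"
    unfolding P_def
    by (rule nn_integral_monotone_convergence_INF_decseq[OF dec P_integrand_meas[OF f], of 0]) (use fin xs0 in \<open>simp add: P_def\<close>)
  finally show ?thesis by (simp add: xs_def)
qed

lemma P_zero_lim:
  fixes f :: "real \<Rightarrow> ennreal"
  assumes f: "f \<in> borel_measurable lborel" and y0: "0 < y0" and fin: "P f s (ennreal y0) < \<infinity>" and s0: "0 \<le> s"
  shows "(INF n. P f s (ennreal (y0 / (real n + 1)))) = 0"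
proof -
  define xs where "xs n = y0 / (real n + 1)" for n
  have xs0: "xs 0 = y0" by (simp add: xs_def)
  have xs_pos: "0 < xs n" for n using y0 by (simp add: xs_def)
  have xs_dec: "xs (Suc n) \<le> xs n" for n using y0 by (simp add: xs_def frac_le)
  have pt: "(INF n. f z * indicator {x. s < x \<and> ennreal x < ennreal (xs n)} z) = 0" for z
  proof -
    have "\<not> (\<forall>n. s < z \<and> ennreal z < ennreal (xs n))" for z
    proof
      assume a: "\<forall>n. s < z \<and> ennreal z < ennreal (xs n)"
      then have zp: "0 < z" using xs_pos
        using s0 by (meson le_less_trans)
      obtain n where n: "y0 / z < real n" using reals_Archimedean2 by blast
      have "y0 < real n * z" using n zp by (simp add: field_simps)
      also have "\<dots> \<le> (real n + 1) * z" using zp by (intro mult_right_mono) auto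
      finally have "xs n < z" using zp by (simp add: xs_def field_simps)
      moreover have "z < xs n" using a xs_pos[of n] ennreal_lt_pos by blast
      ultimately show False by simp
    qed
    then have "(\<Inter>n. {x. s < x \<and> ennreal x < ennreal (xs n)}) = {}" by blast
    then show ?thesis using INF_ind2[of "f z" "\<lambda>n. {x. s < x \<and> ennreal x < ennreal (xs n)}" z] by simp
  qed
  have dec: "decseq (\<lambda>n z. f z * indicator {x. s < x \<and> ennreal x < ennreal (xs n)} z)"
  proof (rule decseq_SucI, rule le_funI)
    fix n z
    show "f z * indicator {x. s < x \<and> ennreal x < ennreal (xs (Suc n))} z \<le> f z * indicator {x. s < x \<and> ennreal x < ennreal (xs n)} z"
      using xs_dec[of n] by (intro mult_left_mono) (auto split: split_indicator intro: order_less_le_trans ennreal_leI)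
  qed
  have "0 = (\<integral>\<^sup>+ z. (INF n. f z * indicator {x. s < x \<and> ennreal x < ennreal (xs n)} z) \<partial>lborel)"
    unfolding pt by simp
  also have "\<dots> = (INF n. P f s (ennreal (xs n)))"
    unfolding P_def
    by (rule nn_integral_monotone_convergence_INF_decseq[OF dec P_integrand_meas[OF f], of 0]) (use fin xs0 in \<open>simp add: P_def\<close>)
  finally show ?thesis by (simp add: xs_def)
qed




definition Iq :: "(real \<Rightarrow> ennreal) \<Rightarrow> (real \<Rightarrow> ennreal) \<Rightarrow> real \<Rightarrow> ennreal \<Rightarrow> ennreal" where
  "Iq w g a T = (\<integral>\<^sup>+ s. w s * epowr (P g s T) a \<partial>lborel)"

lemma Iq_integrand_meas:
  fixes w g :: "real \<Rightarrow> ennreal"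
  assumes w: "w \<in> borel_measurable lborel" and a: "0 < a"
  shows "(\<lambda>s. w s * epowr (P g s T) a) \<in> borel_measurable lborel"
proof -
  have "(\<lambda>s. epowr (P g s T) a) \<in> borel_measurable lborel"
    by (rule antimono_meas) (auto intro!: epowr_mono a P_mono)
  from borel_measurable_times_ennreal[OF w this] show ?thesis by simp
qed

lemma Iq_mono: assumes "0 < a" "T \<le> T'" shows "Iq w g a T \<le> Iq w g a T'"
  unfolding Iq_def
  by (intro nn_integral_mono mult_left_mono epowr_mono P_mono) (use assms in auto)

lemma Iq_left:
  fixes w g :: "real \<Rightarrow> ennreal"
  assumes w: "w \<in> borel_measurable lborel" and g: "g \<in> borel_measurable lborel" and a: "0 < a" and T: "0 < T"
  shows "Iq w g a T = (SUP n. Iq w g a (ennreal (ys T n)))"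
proof -
  have pt: "(SUP n. w s * epowr (P g s (ennreal (ys T n))) a) = w s * epowr (P g s T) a" for s
  proof -
    have "w s * epowr (P g s T) a = w s * epowr (SUP n. P g s (ennreal (ys T n))) a"
      using P_left[OF g T] by simp
    also have "\<dots> = w s * (SUP n. epowr (P g s (ennreal (ys T n))) a)"
      using epowr_iso(2)[OF a, of "range (\<lambda>n. P g s (ennreal (ys T n)))"] by (simp add: image_image)
    also have "\<dots> = (SUP n. w s * epowr (P g s (ennreal (ys T n))) a)"
      by (rule SUP_mult_left_ennreal)
    finally show ?thesis by simp
  qed
  have inc: "incseq (\<lambda>n s. w s * epowr (P g s (ennreal (ys T n))) a)"
  proof (rule incseq_SucI, rule le_funI)
    fix n s
    have "ys T n \<le> ys T (Suc n)" using ys_inc[OF T] by (simp add: incseq_SucD)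
    then show "w s * epowr (P g s (ennreal (ys T n))) a \<le> w s * epowr (P g s (ennreal (ys T (Suc n)))) a"
      by (intro mult_left_mono epowr_mono P_mono a ennreal_leI) auto
  qed
  have "Iq w g a T = (\<integral>\<^sup>+ s. (SUP n. w s * epowr (P g s (ennreal (ys T n))) a) \<partial>lborel)"
    unfolding Iq_def pt ..
  also have "\<dots> = (SUP n. Iq w g a (ennreal (ys T n)))"
    unfolding Iq_def by (rule nn_integral_monotone_convergence_SUP[OF inc Iq_integrand_meas[OF w a]])
  finally show ?thesis .
qed

lemma Iq_right:
  fixes w g :: "real \<Rightarrow> ennreal"
  assumes w: "w \<in> borel_measurable lborel" and g: "g \<in> borel_measurable lborel" and a: "0 < a"
    and wfin: "\<And>s. w s < \<infinity>"
    and x: "0 < x" "x < y0" and fin: "Iq w g a (ennreal y0) < \<infinity>"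
  shows "Iq w g a (ennreal x) = (INF n. Iq w g a (ennreal (x + (y0 - x) / (real n + 1))))"
proof -
  define xs where "xs n = x + (y0 - x) / (real n + 1)" for n
  have xs0: "xs 0 = y0" by (simp add: xs_def)
  have xs_dec: "xs (Suc n) \<le> xs n" for n using x by (simp add: xs_def frac_le)
  have AEfin: "AE s in lborel. w s * epowr (P g s (ennreal y0)) a \<noteq> \<infinity>"
    using nn_integral_PInf_AE[OF Iq_integrand_meas[OF w a]] fin by (simp add: Iq_def)
  have pt: "AE s in lborel. w s * epowr (P g s (ennreal x)) a = (INF n. w s * epowr (P g s (ennreal (xs n))) a)"
    using AEfin
  proof eventually_elim
    case (elim s)
    show ?case
    proof (cases "w s = 0")
      case True then show ?thesis by simp
    next
      case False
      then have "epowr (P g s (ennreal y0)) a \<noteq> \<infinity>" using elim by (auto simp: ennreal_mult_eq_top_iff)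
      then have Pfin: "P g s (ennreal y0) < \<infinity>" by (metis epowr_eq_top infinity_ennreal_def top.not_eq_extremum)
      have "w s * epowr (P g s (ennreal x)) a = w s * epowr (INF n. P g s (ennreal (xs n))) a"
        using P_right[OF g x Pfin] by (simp add: xs_def)
      also have "\<dots> = w s * (INF n. epowr (P g s (ennreal (xs n))) a)"
        using epowr_iso(1)[OF a, of "range (\<lambda>n. P g s (ennreal (xs n)))"] by (simp add: image_image)
      also have "\<dots> = (INF n. w s * epowr (P g s (ennreal (xs n))) a)"
        using mult_iso[OF wfin[of s], of "range (\<lambda>n. epowr (P g s (ennreal (xs n))) a)"] by (simp add: image_image)
      finally show ?thesis .
    qed
  qed
  have dec: "decseq (\<lambda>n s. w s * epowr (P g s (ennreal (xs n))) a)"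
  proof (rule decseq_SucI, rule le_funI)
    fix n s
    show "w s * epowr (P g s (ennreal (xs (Suc n)))) a \<le> w s * epowr (P g s (ennreal (xs n))) a"
      using xs_dec[of n] by (intro mult_left_mono epowr_mono P_mono a ennreal_leI) auto
  qed
  have "Iq w g a (ennreal x) = (\<integral>\<^sup>+ s. (INF n. w s * epowr (P g s (ennreal (xs n))) a) \<partial>lborel)"
    unfolding Iq_def by (rule nn_integral_cong_AE[OF pt])
  also have "\<dots> = (INF n. Iq w g a (ennreal (xs n)))"
    unfolding Iq_def
    by (rule nn_integral_monotone_convergence_INF_decseq[OF dec Iq_integrand_meas[OF w a], of 0]) (use fin xs0 in \<open>simp add: Iq_def\<close>)
  finally show ?thesis by (simp add: xs_def)
qed

lemma Iq_zero:
  fixes w g :: "real \<Rightarrow> ennreal"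
  assumes w: "w \<in> borel_measurable lborel" and a: "0 < a"
    and w0: "\<And>s. s \<le> 0 \<Longrightarrow> w s = 0"
    and fin: "Iq w g a (ennreal 1) < \<infinity>"
  shows "(INF n. Iq w g a (ennreal (1 / (real n + 1)))) = 0"
proof -
  define xs where "xs n = 1 / (real n + 1)" for n
  have xs0: "xs 0 = 1" by (simp add: xs_def)
  have xs_dec: "xs (Suc n) \<le> xs n" for n by (simp add: xs_def frac_le)
  have pt: "(INF n. w s * epowr (P g s (ennreal (xs n))) a) = 0" for s
  proof (cases "s \<le> 0")
    case True then show ?thesis using w0 by simp
  next
    case False
    obtain n where n: "1 / s < real n" using reals_Archimedean2 by blast
    have "1 < real n * s" using n False by (simp add: field_simps)
    also have "\<dots> \<le> (real n + 1) * s" using False by (intro mult_right_mono) auto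
    finally have "xs n \<le> s" using False by (simp add: xs_def field_simps)
    then have "P g s (ennreal (xs n)) = 0" by (intro P_zero ennreal_leI)
    then show ?thesis by (intro antisym INF_lower2[of n]) auto
  qed
  have dec: "decseq (\<lambda>n s. w s * epowr (P g s (ennreal (xs n))) a)"
  proof (rule decseq_SucI, rule le_funI)
    fix n s
    show "w s * epowr (P g s (ennreal (xs (Suc n)))) a \<le> w s * epowr (P g s (ennreal (xs n))) a"
      using xs_dec[of n] by (intro mult_left_mono epowr_mono P_mono a ennreal_leI) auto
  qed
  have "0 = (\<integral>\<^sup>+ s. (INF n. w s * epowr (P g s (ennreal (xs n))) a) \<partial>lborel)"
    unfolding pt by simp
  also have "\<dots> = (INF n. Iq w g a (ennreal (xs n)))"
    unfolding Iq_def
    by (rule nn_integral_monotone_convergence_INF_decseq[OF dec Iq_integrand_meas[OF w a], of 0]) (use fin xs0 in \<open>simp add: Iq_def\<close>)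
  finally show ?thesis by (simp add: xs_def)
qed




definition hw :: "(real \<Rightarrow> real) \<Rightarrow> real \<Rightarrow> ennreal" where
  "hw w x = ennreal (w x) * indicator {0<..} x"

lemma hw_meas: assumes "weight w" shows "hw w \<in> borel_measurable lborel"
proof -
  have m: "(\<lambda>x. indicator {0<..} x *\<^sub>R w x) \<in> borel_measurable lborel"
    using assms by (simp add: weight_def set_borel_measurable_def)
  have "hw w = (\<lambda>x. ennreal (indicator {0<..} x *\<^sub>R w x))"
    by (auto simp: hw_def fun_eq_iff split: split_indicator)
  then show ?thesis using m by simp
qed

lemma hw_fin: "hw w x < \<infinity>"
  by (simp add: hw_def split: split_indicator)

lemma hw_0: "x \<le> 0 \<Longrightarrow> hw w x = 0"
  by (simp add: hw_def)

lemma Wint_eq: "Wint w s T = P (hw w) s T"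
  unfolding Wint_def P_def hw_def
  by (intro nn_integral_cong) (auto split: split_indicator)

lemma fund_eq:
  assumes p: "0 < p" and m: "0 < m"
  shows "epowr (fundfun m p u v T) p = Iq (hw v) (hw u) (p / m) T"
proof -
  have I: "(\<integral>\<^sup>+ s \<in> {s::real. 0 < s \<and> ennreal s < T}. ennreal (v s) * epowr (Wint u s T) (p / m) \<partial>lborel)
      = Iq (hw v) (hw u) (p / m) T"
    unfolding Iq_def Wint_eq
  proof (intro nn_integral_cong)
    fix s :: real
    show "ennreal (v s) * epowr (P (hw u) s T) (p / m) * indicator {s. 0 < s \<and> ennreal s < T} s
        = hw v s * epowr (P (hw u) s T) (p / m)"
    proof (cases "0 < s \<and> ennreal s < T")
      case True then show ?thesis by (simp add: hw_def)
    next
      case False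
      then have "s \<le> 0 \<or> T \<le> ennreal s" by auto
      then show ?thesis using False
        by (auto simp: hw_def P_zero)
    qed
  qed
  have "epowr (epowr X (1 / p)) p = X" for X
    using epowr_inv[of "1/p" X] p by simp
  then show ?thesis unfolding fundfun_def I by simp
qed

lemma enn_real_rep: fixes x :: ennreal assumes "0 < x" "x < \<infinity>"
  obtains r where "x = ennreal r" "0 < r"
  using assms
  by (metis enn2real_positive_iff ennreal_enn2real infinity_ennreal_def top.not_eq_extremum)

lemma INF_lt_ex: "(INF n. f n) < (e::ennreal) \<Longrightarrow> \<exists>n. f n < e"
  by (simp add: INF_less_iff)

lemma concrete_absprob:
  fixes hv hu :: "real \<Rightarrow> ennreal" and a :: real and C :: ennreal
  assumes hv: "hv \<in> borel_measurable lborel" and hu: "hu \<in> borel_measurable lborel"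
    and hvfin: "\<And>x. hv x < \<infinity>" and hv0: "\<And>x. x \<le> 0 \<Longrightarrow> hv x = 0"
    and a: "0 < a" and C: "1 < C" "C < \<infinity>"
    and adm: "\<And>t::real. 0 < t \<Longrightarrow> 0 < Iq hv hu a (ennreal t) \<and> Iq hv hu a (ennreal t) < \<infinity>"
  shows "absprob (\<lambda>T. P hv 0 T) (\<lambda>T. Iq hv hu a T) C"
proof
  show "1 < C" "C < \<infinity>" using C by auto
  show "mono (\<lambda>T. P hv 0 T)" by (auto intro!: monoI P_mono)
  show "mono (\<lambda>T. Iq hv hu a T)" by (auto intro!: monoI Iq_mono a)
  show Gfin: "0 < Iq hv hu a x \<and> Iq hv hu a x < \<infinity>" if "0 < x" "x < \<infinity>" for x
    using that adm by (metis enn_real_rep)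
  show "0 < P hv 0 x" if x: "0 < x" "x < \<infinity>" for x
  proof (rule ccontr)
    assume "\<not> 0 < P hv 0 x"
    then have "P hv 0 x = 0" by simp
    then have AE0: "AE z in lborel. hv z * indicator {z. 0 < z \<and> ennreal z < x} z = 0"
      unfolding P_def using nn_integral_0_iff_AE[OF P_integrand_meas[OF hv]] by simp
    have "AE s in lborel. hv s * epowr (P hu s x) a = 0"
      using AE0
    proof eventually_elim
      case (elim s)
      show ?case
      proof (cases "0 < s \<and> ennreal s < x")
        case True then show ?thesis using elim by simp
      next
        case False
        then have "s \<le> 0 \<or> x \<le> ennreal s" by auto
        then show ?thesis using hv0 P_zero by auto
      qed
    qed
    then have "Iq hv hu a x = 0" unfolding Iq_def using nn_integral_0_iff_AE[OF Iq_integrand_meas[OF hv a]] by simp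
    then show False using Gfin[OF x] by simp
  qed
  show "\<exists>y. 0<y \<and> y<T \<and> e < P hv 0 y" if T: "0 < T" and e: "e < P hv 0 T" for T e
  proof -
    obtain n where "e < P hv 0 (ennreal (ys T n))" using e P_left[OF hv T] less_SUP_iff by metis
    then show ?thesis using ys_pos[OF T, of n] ys_lt[OF T, of n] by (intro exI[of _ "ennreal (ys T n)"]) auto
  qed
  show "\<exists>y. 0<y \<and> y<T \<and> e < Iq hv hu a y" if T: "0 < T" and e: "e < Iq hv hu a T" for T e
  proof -
    obtain n where "e < Iq hv hu a (ennreal (ys T n))" using e Iq_left[OF hv hu a T] less_SUP_iff by metis
    then show ?thesis using ys_pos[OF T, of n] ys_lt[OF T, of n] by (intro exI[of _ "ennreal (ys T n)"]) auto
  qed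
  show "\<exists>y. x<y \<and> y<b \<and> P hv 0 y < e"
    if x: "0<x" "x<y0" and fin: "P hv 0 y0 < \<infinity>" and e: "P hv 0 x < e" and b: "x < b" for x y0 e b
  proof -
    obtain z where z: "x < z" "z < y0" using dense x by blast
    have zfin: "z < \<infinity>" using z(2) top_greatest[of y0] by (metis infinity_ennreal_def order_less_le_trans)
    have z0: "0 < z" using x z by (meson order.strict_trans)
    obtain zr where zr: "z = ennreal zr" "0 < zr" using enn_real_rep[OF z0 zfin] by blast
    have xfin: "x < \<infinity>" using z(1) zfin by simp
    obtain xr where xr: "x = ennreal xr" "0 < xr" using enn_real_rep[OF x(1) xfin] by blast
    have xz: "xr < zr" using z(1) xr zr by (simp add: ennreal_lt_pos)
    have "ennreal zr \<le> y0" using z zr by simp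
    then have "P hv 0 (ennreal zr) \<le> P hv 0 y0" by (intro P_mono) auto
    then have "P hv 0 (ennreal zr) < \<infinity>" using fin by (simp add: order_le_less_trans)
    then have eqI: "P hv 0 x = (INF n. P hv 0 (ennreal (xr + (zr - xr) / (real n + 1))))"
      using P_right[OF hv xr(2) xz] xr by simp
    then have "(INF n. P hv 0 (ennreal (xr + (zr - xr) / (real n + 1)))) < e" using e by simp
    then obtain n where n: "P hv 0 (ennreal (xr + (zr - xr) / (real n + 1))) < e" by (blast dest: INF_lt_ex)
    define q where "q = ennreal (xr + (zr - xr) / (real n + 1))"
    have xq: "x < q" using xr xz by (simp add: q_def ennreal_lt_pos)
    obtain y where y: "x < y" "y < min q b" using dense[of x "min q b"] xq b by auto
    have "P hv 0 y \<le> P hv 0 q" using y by (intro P_mono) auto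
    then show ?thesis using y n q_def by (intro exI[of _ y]) auto
  qed
  show "\<exists>y. x<y \<and> y<b \<and> Iq hv hu a y < e"
    if x: "0<x" "x<\<infinity>" and e: "Iq hv hu a x < e" and b: "x < b" for x e b
  proof -
    obtain xr where xr: "x = ennreal xr" "0 < xr" using enn_real_rep[OF x] by blast
    have xz: "xr < xr + 1" by simp
    have "Iq hv hu a (ennreal (xr + 1)) < \<infinity>" using adm[of "xr + 1"] xr by simp
    then have "Iq hv hu a x = (INF n. Iq hv hu a (ennreal (xr + (xr + 1 - xr) / (real n + 1))))"
      using Iq_right[OF hv hu a hvfin xr(2) xz] xr by simp
    then have "(INF n. Iq hv hu a (ennreal (xr + (xr + 1 - xr) / (real n + 1)))) < e" using e by simp
    then obtain n where n: "Iq hv hu a (ennreal (xr + (xr + 1 - xr) / (real n + 1))) < e" by (blast dest: INF_lt_ex)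
    define q where "q = ennreal (xr + (xr + 1 - xr) / (real n + 1))"
    have xq: "x < q" using xr by (simp add: q_def ennreal_lt_pos)
    obtain y where y: "x < y" "y < min q b" using dense[of x "min q b"] xq b by auto
    have "Iq hv hu a y \<le> Iq hv hu a q" using y by (intro Iq_mono a) auto
    then show ?thesis using y n q_def by (intro exI[of _ y]) auto
  qed
  show "\<exists>y. 0<y \<and> y<b \<and> P hv 0 y < e"
    if y0: "0<y0" and fin: "P hv 0 y0 < \<infinity>" and e: "0 < e" and b: "0 < b" for y0 e b
  proof -
    obtain z where z: "0 < z" "z < min y0 1" using dense[of 0 "min y0 1"] y0 by auto
    have zfin: "z < \<infinity>" using z by (metis ennreal_one_less_top infinity_ennreal_def min.strict_boundedE order.strict_trans)
    obtain zr where zr: "z = ennreal zr" "0 < zr" using enn_real_rep[OF z(1) zfin] by blast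
    have "ennreal zr \<le> y0" using z zr by (simp add: less_imp_le)
    then have "P hv 0 (ennreal zr) \<le> P hv 0 y0" by (intro P_mono) auto
    then have "P hv 0 (ennreal zr) < \<infinity>" using fin by (simp add: order_le_less_trans)
    then have "(INF n. P hv 0 (ennreal (zr / (real n + 1)))) = 0"
      using P_zero_lim[OF hv zr(2)] by simp
    then have "(INF n. P hv 0 (ennreal (zr / (real n + 1)))) < e" using e by simp
    then obtain n where n: "P hv 0 (ennreal (zr / (real n + 1))) < e" by (blast dest: INF_lt_ex)
    define q where "q = ennreal (zr / (real n + 1))"
    have xq: "0 < q" using zr by (simp add: q_def)
    obtain y where y: "0 < y" "y < min q b" using dense[of 0 "min q b"] xq b by auto
    have "P hv 0 y \<le> P hv 0 q" using y by (intro P_mono) auto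
    then show ?thesis using y n q_def by (intro exI[of _ y]) auto
  qed
  show "\<exists>y. 0<y \<and> y<b \<and> Iq hv hu a y < e" if e: "0<e" and b: "0<b" for e b
  proof -
    have "Iq hv hu a (ennreal 1) < \<infinity>" using adm[of 1] by simp
    then have "(INF n. Iq hv hu a (ennreal (1 / (real n + 1)))) = 0"
      using Iq_zero[OF hv a hv0] by simp
    then have "(INF n. Iq hv hu a (ennreal (1 / (real n + 1)))) < e" using e by simp
    then obtain n where n: "Iq hv hu a (ennreal (1 / (real n + 1))) < e" by (blast dest: INF_lt_ex)
    define q where "q = ennreal (1 / (real n + 1))"
    have xq: "0 < q" by (simp add: q_def)
    obtain y where y: "0 < y" "y < min q b" using dense[of 0 "min q b"] xq b by auto
    have "Iq hv hu a y \<le> Iq hv hu a q" using y by (intro Iq_mono a) auto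
    then show ?thesis using y n q_def by (intro exI[of _ y]) auto
  qed
  show "P hv 0 x < \<infinity>" if GI: "Iq hv hu a \<infinity> = \<infinity>" and FI: "P hv 0 \<infinity> = \<infinity>" and x: "x < \<infinity>" for x
  proof (rule ccontr)
    assume "\<not> P hv 0 x < \<infinity>"
    then have Finf: "P hv 0 x = \<infinity>" by (metis infinity_ennreal_def top.not_eq_extremum)
    have x0: "0 < x"
    proof (rule ccontr)
      assume "\<not> 0 < x" then have "x = 0" by simp
      then have "P hv 0 x = 0" by (intro P_zero) simp
      then show False using Finf by simp
    qed
    obtain xr where xr: "x = ennreal xr" "0 < xr" using enn_real_rep[OF x0 x] by blast
    show False
    proof (cases "P hu xr \<infinity> = 0")
      case False
      then have "0 < (SUP n. P hu xr (ennreal (ys \<infinity> n)))" using P_left[OF hu, of \<infinity> xr] by (simp add: zero_less_iff_neq_zero)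
      then obtain n where n: "0 < P hu xr (ennreal (ys \<infinity> n))" by (auto simp: less_SUP_iff)
      define y where "y = ys \<infinity> n"
      have y0: "0 < y" using ys_pos[of \<infinity> n] by (simp add: y_def)
      have low: "(\<integral>\<^sup>+ s. hv s * indicator {s. 0 < s \<and> ennreal s < x} s * epowr (P hu xr (ennreal y)) a \<partial>lborel) \<le> Iq hv hu a (ennreal y)"
        unfolding Iq_def
      proof (intro nn_integral_mono)
        fix s
        show "hv s * indicator {s. 0 < s \<and> ennreal s < x} s * epowr (P hu xr (ennreal y)) a \<le> hv s * epowr (P hu s (ennreal y)) a"
        proof (cases "0 < s \<and> ennreal s < x")
          case True
          then have "s \<le> xr" using xr by (simp add: ennreal_lt_pos)
          then have "epowr (P hu xr (ennreal y)) a \<le> epowr (P hu s (ennreal y)) a" by (intro epowr_mono a P_mono) auto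
          then show ?thesis using True by (simp add: mult_left_mono)
        next
          case False then show ?thesis by simp
        qed
      qed
      have "(\<integral>\<^sup>+ s. hv s * indicator {s. 0 < s \<and> ennreal s < x} s * epowr (P hu xr (ennreal y)) a \<partial>lborel)
          = P hv 0 x * epowr (P hu xr (ennreal y)) a"
        unfolding P_def by (rule nn_integral_multc[OF P_integrand_meas[OF hv]])
      also have "\<dots> = \<infinity>" using Finf epowr_pos[OF a n] by (simp add: y_def ennreal_mult_eq_top_iff)
      finally have "Iq hv hu a (ennreal y) = \<infinity>" using low by (simp add: top_unique)
      then show False using adm[OF y0] by simp
    next
      case True
      have pt: "P hu s \<infinity> \<le> P hu s (ennreal xr)" for s
      proof (cases "xr \<le> s")
        case True
        then have "P hu s \<infinity> \<le> P hu xr \<infinity>" by (intro P_mono) auto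
        then show ?thesis using \<open>P hu xr \<infinity> = 0\<close> by simp
      next
        case False
        have "P hu s \<infinity> \<le> (\<integral>\<^sup>+ z. hu z * indicator {z. s < z \<and> ennreal z < ennreal xr} z + hu z * indicator {z. xr < z \<and> ennreal z < \<infinity>} z \<partial>lborel)"
          unfolding P_def
        proof (rule nn_integral_mono_AE)
          show "AE z in lborel. hu z * indicator {z. s < z \<and> ennreal z < \<infinity>} z \<le> hu z * indicator {z. s < z \<and> ennreal z < ennreal xr} z + hu z * indicator {z. xr < z \<and> ennreal z < \<infinity>} z"
            using AE_lborel_singleton[of xr]
          proof eventually_elim
            case (elim z)
            show ?case
            proof (cases "z < xr")
              case True
              then have "ennreal z < ennreal xr" using xr by (simp add: ennreal_lt_pos)
              then show ?thesis using True by (auto split: split_indicator)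
            next
              case False
              then have "xr < z" using elim by simp
              then show ?thesis by (auto split: split_indicator)
            qed
          qed
        qed
        also have "\<dots> = P hu s (ennreal xr) + P hu xr \<infinity>"
          unfolding P_def by (rule nn_integral_add[OF P_integrand_meas[OF hu] P_integrand_meas[OF hu]])
        finally show ?thesis using \<open>P hu xr \<infinity> = 0\<close> by simp
      qed
      have "Iq hv hu a \<infinity> \<le> Iq hv hu a (ennreal xr)"
        unfolding Iq_def by (intro nn_integral_mono mult_left_mono epowr_mono a pt) auto
      then show False using adm[OF xr(2)] GI by (simp add: top_unique)
    qed
  qed
qed




theorem theorem3p4:
  fixes m p :: real and u v :: "real \<Rightarrow> real"
  assumes "0 < m" and "0 < p"
    and "weight u" and "weight v"
    and "admissible m p u v"
  shows "\<exists>K::ereal. K \<in> {0, \<infinity>} \<and>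
    (\<exists>(K1::int set) K2 (t::int \<Rightarrow> ennreal).
       K1 \<inter> K2 = {} \<and> K1 \<union> K2 = Kset K \<and>
       (\<forall>k \<in> Kset K - {k. ereal (of_int k) = K}.
          0 < t (k - 1) \<and> t (k - 1) \<le> t k \<and> t k < \<infinity>) \<and>
       (K = 0 \<longrightarrow> t 0 = \<infinity>) \<and>
       (\<forall>k \<in> Kset K.
          Wint v 0 (t k) \<ge> ennreal (2 powr (p / m + 1)) * Wint v 0 (t (k - 1)) \<and>
          epowr (fundfun m p u v (t k)) p
            \<ge> ennreal (2 powr (p / m + 1)) * epowr (fundfun m p u v (t (k - 1))) p) \<and>
       (\<forall>k \<in> K1. Wint v 0 (t k) = ennreal (2 powr (p / m + 1)) * Wint v 0 (t (k - 1))) \<and>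
       (\<forall>k \<in> K2. epowr (fundfun m p u v (t k)) p
                   = ennreal (2 powr (p / m + 1)) * epowr (fundfun m p u v (t (k - 1))) p))"
proof -
  note m = assms(1) and p = assms(2)
  have a: "0 < p / m" using m p by simp
  have c1: "1 < 2 powr (p / m + 1)"
  proof -
    have "(2::real) powr 0 < 2 powr (p / m + 1)" using a by (intro powr_less_mono) auto
    then show ?thesis by simp
  qed
  have C: "1 < ennreal (2 powr (p / m + 1))" using c1 by (simp add: ennreal_1[symmetric] ennreal_less_iff del: ennreal_1)
  have adm: "0 < Iq (hw v) (hw u) (p / m) (ennreal t) \<and> Iq (hw v) (hw u) (p / m) (ennreal t) < \<infinity>" if t: "0 < t" for t
  proof -
    have f: "0 < fundfun m p u v (ennreal t)" "fundfun m p u v (ennreal t) < \<infinity>"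
      using assms(5) t by (auto simp: admissible_def)
    have "0 < epowr (fundfun m p u v (ennreal t)) p" using epowr_pos[OF p f(1)] .
    moreover have "epowr (fundfun m p u v (ennreal t)) p < \<infinity>"
      using f(2) by (metis epowr_eq_top infinity_ennreal_def top.not_eq_extremum)
    ultimately show ?thesis using fund_eq[OF p m] by simp
  qed
  have A: "absprob (\<lambda>T. P (hw v) 0 T) (\<lambda>T. Iq (hw v) (hw u) (p / m) T) (ennreal (2 powr (p / m + 1)))"
    using concrete_absprob[OF hw_meas[OF assms(4)] hw_meas[OF assms(3)] hw_fin hw_0 a C _ adm] by simp
  show ?thesis
    unfolding Wint_eq fund_eq[OF p m] using absprob.abs_main[OF A] by simp
qed


end
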